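(* In the BBoxER framework described in the context, let the seed $\omega$ of the algorithm $a$ be a random variable independent of the dataset draw $\omega_D$, let $b\in\mathbb N$ be a budget and $\epsilon>0$, and assume there is $\delta_{1,\epsilon}$ with $P_{\omega_D}(|\widehat L(x)-L(x)|>\epsilon)\le\delta_{1,\epsilon}$ for every parameter $x$. Then $$P_{\omega,\omega_D}\big(|\widehat L(\widehat x)-L(\widehat x)|>\epsilon\big)\le \Big(\sup_{\omega\ \text{constant}} N(\omega,a,b)\Big)\cdot\delta_{1,\epsilon},$$ where $\widehat x$ depends on both $\omega$ and $\omega_D$ and the supremum is over all fixed values of the seed.
   Context: BBoxER framework. Fix an initial model $m_0$ and a map $(m_0,x)\mapsto \mathrm{modified}(m_0,x)$ sending a parameter $x$ to a model. Let $\mathcal D$ be the class of datasets $D$ of size $s$ drawn from a distribution $F$; $\omega_D$ denotes the randomness of the draw of $D$. A black-box optimization algorithm $a$, deterministic given its seed $\omega$, is run with budget $b$ on $D$: it is initialized from $\omega$; at each iteration $i=1,\dots,b$ it proposes $x_i$ and model $m_i=\mathrm{modified}(m_0,x_i)$, declares a finite number $k_i\ge1$ of possible comparison outcomes, then receives $\mathrm{choice}_i\in\{1,\dots,k_i\}$ computed by comparing $m_1,\dots,m_i$ on $D$; finally it recommends $\widehat x$. The algorithm accesses $D$ only through the $\mathrm{choice}_i$, so $\widehat x$ is a deterministic function of $(\omega,a,b,\mathrm{choice}_1,\dots,\mathrm{choice}_b)$. The internal state is $S(\omega,D,a,b)=(\omega,\mathrm{choice}_1,\dots,\mathrm{choice}_b)$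 and $N(\omega,a,b)=\operatorname{Card}\{S(\omega,D,a,b):D\in\mathcal D\}$. $L(x)$ is the generalization error under $F$ of $\mathrm{modified}(m_0,x)$, $\widehat L(x)$ its empirical error on $D$. *)

theory Defs
  imports "HOL-Probability.Probability"
begin

text \<open>An algorithm is given by three deterministic functions of its seed
  and of the comparison outcomes received so far:
  propose (the next parameter x_i), nout (the number k_i of possible outcomes of the next
  comparison) and recommend (the final recommendation).  The comparison of the models
  m_1,...,m_i on dataset D with k_i declared outcomes is cmp D k_i [m_1,...,m_i].\<close>

fun bbox_run ::
  "('w \<Rightarrow> nat list \<Rightarrow> 'x) \<Rightarrow> ('w \<Rightarrow> nat list \<Rightarrow> nat) \<Rightarrow>
   ('m \<Rightarrow> 'x \<Rightarrow> 'm) \<Rightarrow> 'm \<Rightarrow> ('d \<Rightarrow> nat \<Rightarrow> 'm list \<Rightarrow> nat) \<Rightarrow>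
   'w \<Rightarrow> 'd \<Rightarrow> nat \<Rightarrow> 'x list \<times> nat list" where
  "bbox_run propose nout modified m0 cmp \<omega> D 0 = ([], [])"
| "bbox_run propose nout modified m0 cmp \<omega> D (Suc i) =
     (let (xs, cs) = bbox_run propose nout modified m0 cmp \<omega> D i;
          x = propose \<omega> cs;
          k = nout \<omega> cs;
          c = cmp D k (map (modified m0) (xs @ [x]))
      in (xs @ [x], cs @ [c]))"

definition bbox_choices where
  "bbox_choices propose nout modified m0 cmp \<omega> D b =
     snd (bbox_run propose nout modified m0 cmp \<omega> D b)"

definition bbox_state where
  "bbox_state propose nout modified m0 cmp \<omega> D b =
     (\<omega>, bbox_choices propose nout modified m0 cmp \<omega> D b)"

definition bbox_xhat where
  "bbox_xhat propose nout recommend modified m0 cmp \<omega> D b =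
     recommend \<omega> (bbox_choices propose nout modified m0 cmp \<omega> D b)"

definition bbox_N where
  "bbox_N propose nout modified m0 cmp \<omega> Ds b =
     card ((\<lambda>D. bbox_state propose nout modified m0 cmp \<omega> D b) ` Ds)"

end

theory Submission
  imports Defs
begin

lemma run_len: "length (snd (bbox_run propose nout modified m0 cmp \<omega> D i)) = i"
  by (induction i) (auto simp: Let_def split: prod.splits)

lemma choices_finite:
  assumes nout_pos: "\<And>\<omega> cs. nout \<omega> cs \<ge> 1"
    and cmp_range: "\<And>D k ms. k \<ge> 1 \<Longrightarrow> cmp D k ms \<in> {1..k}"
  shows "finite ((\<lambda>D. bbox_choices propose nout modified m0 cmp \<omega> D i) ` Ds)"
proof (induction i)
  case 0
  have "(\<lambda>D. bbox_choices propose nout modified m0 cmp \<omega> D 0) ` Ds \<subseteq> {[]}"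
    by (auto simp: bbox_choices_def)
  then show ?case using finite_subset by blast
next
  case (Suc i)
  let ?C = "(\<lambda>D. bbox_choices propose nout modified m0 cmp \<omega> D i) ` Ds"
  have "(\<lambda>D. bbox_choices propose nout modified m0 cmp \<omega> D (Suc i)) ` Ds \<subseteq>
        (\<Union>cs\<in>?C. (\<lambda>c. cs @ [c]) ` {1..nout \<omega> cs})"
  proof
    fix y assume "y \<in> (\<lambda>D. bbox_choices propose nout modified m0 cmp \<omega> D (Suc i)) ` Ds"
    then obtain D where D: "D \<in> Ds" and y: "y = bbox_choices propose nout modified m0 cmp \<omega> D (Suc i)" by auto
    obtain xs cs where r: "bbox_run propose nout modified m0 cmp \<omega> D i = (xs, cs)" by fastforce
    have cs: "cs = bbox_choices propose nout modified m0 cmp \<omega> D i" using r by (simp add: bbox_choices_def)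
    let ?c = "cmp D (nout \<omega> cs) (map (modified m0) (xs @ [propose \<omega> cs]))"
    have y2: "y = cs @ [?c]" using y r by (simp add: bbox_choices_def Let_def)
    have "?c \<in> {1..nout \<omega> cs}" using cmp_range nout_pos by blast
    then show "y \<in> (\<Union>cs\<in>?C. (\<lambda>c. cs @ [c]) ` {1..nout \<omega> cs})" using y2 cs D by blast
  qed
  moreover have "finite (\<Union>cs\<in>?C. (\<lambda>c. cs @ [c]) ` {1..nout \<omega> cs})" using Suc by blast
  ultimately show ?case using finite_subset by blast
qed

theorem theorem3:
  fixes PW :: "'w measure" and PD :: "'d measure"
    and propose :: "'w \<Rightarrow> nat list \<Rightarrow> 'x" and nout :: "'w \<Rightarrow> nat list \<Rightarrow> nat"
    and recommend :: "'w \<Rightarrow> nat list \<Rightarrow> 'x"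
    and modified :: "'m \<Rightarrow> 'x \<Rightarrow> 'm" and m0 :: "'m"
    and cmp :: "'d \<Rightarrow> nat \<Rightarrow> 'm list \<Rightarrow> nat"
    and L :: "'m \<Rightarrow> real" and Lhat :: "'d \<Rightarrow> 'm \<Rightarrow> real"
    and b :: nat and \<epsilon> \<delta> :: real
  assumes PW: "prob_space PW" and PD: "prob_space PD"
    and nout_pos: "\<And>\<omega> cs. nout \<omega> cs \<ge> 1"
    and cmp_range: "\<And>D k ms. k \<ge> 1 \<Longrightarrow> cmp D k ms \<in> {1..k}"
    and eps: "\<epsilon> > 0"
    and meas_x: "\<And>x. {D \<in> space PD. \<bar>Lhat D (modified m0 x) - L (modified m0 x)\<bar> > \<epsilon>} \<in> sets PD"
    and delta1: "\<And>x. measure PD {D \<in> space PD. \<bar>Lhat D (modified m0 x) - L (modified m0 x)\<bar> > \<epsilon>} \<le> \<delta>"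
    and meas_joint: "{(\<omega>, D) \<in> space (PW \<Otimes>\<^sub>M PD).
        \<bar>Lhat D (modified m0 (bbox_xhat propose nout recommend modified m0 cmp \<omega> D b))
          - L (modified m0 (bbox_xhat propose nout recommend modified m0 cmp \<omega> D b))\<bar> > \<epsilon>}
        \<in> sets (PW \<Otimes>\<^sub>M PD)"
  shows "emeasure (PW \<Otimes>\<^sub>M PD) {(\<omega>, D) \<in> space (PW \<Otimes>\<^sub>M PD).
        \<bar>Lhat D (modified m0 (bbox_xhat propose nout recommend modified m0 cmp \<omega> D b))
          - L (modified m0 (bbox_xhat propose nout recommend modified m0 cmp \<omega> D b))\<bar> > \<epsilon>}
      \<le> (SUP \<omega>\<in>space PW. of_nat (bbox_N propose nout modified m0 cmp \<omega> (space PD) b))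
         * ennreal \<delta>"
proof -
  let ?A = "{(\<omega>, D) \<in> space (PW \<Otimes>\<^sub>M PD).
        \<bar>Lhat D (modified m0 (bbox_xhat propose nout recommend modified m0 cmp \<omega> D b))
          - L (modified m0 (bbox_xhat propose nout recommend modified m0 cmp \<omega> D b))\<bar> > \<epsilon>}"
  let ?S = "(SUP \<omega>\<in>space PW. (of_nat (bbox_N propose nout modified m0 cmp \<omega> (space PD) b) :: ennreal))"
  define E where "E x = {D \<in> space PD. \<bar>Lhat D (modified m0 x) - L (modified m0 x)\<bar> > \<epsilon>}" for x
  interpret D: prob_space PD by (rule PD)
  interpret W: prob_space PW by (rule PW)
  have eq: "emeasure (PW \<Otimes>\<^sub>M PD) ?A = (\<integral>\<^sup>+ \<omega>. emeasure PD (Pair \<omega> -` ?A) \<partial>PW)"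
    using D.emeasure_pair_measure_alt[OF meas_joint] .
  have bound: "emeasure PD (Pair \<omega> -` ?A) \<le> ?S * ennreal \<delta>" if w: "\<omega> \<in> space PW" for \<omega>
  proof -
    let ?C = "(\<lambda>D. bbox_choices propose nout modified m0 cmp \<omega> D b) ` space PD"
    have fin: "finite ?C" by (rule choices_finite[OF nout_pos cmp_range])
    have sub: "Pair \<omega> -` ?A \<subseteq> (\<Union>cs\<in>?C. E (recommend \<omega> cs))"
      using w by (auto simp: E_def bbox_xhat_def space_pair_measure)
    have "emeasure PD (Pair \<omega> -` ?A) \<le> emeasure PD (\<Union>cs\<in>?C. E (recommend \<omega> cs))"
      proof (rule emeasure_mono[OF sub])
      show "(\<Union>cs\<in>?C. E (recommend \<omega> cs)) \<in> sets PD"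
        using fin meas_x by (intro sets.finite_UN) (auto simp: E_def)
    qed
    also have "\<dots> \<le> (\<Sum>cs\<in>?C. emeasure PD (E (recommend \<omega> cs)))"
      by (rule emeasure_subadditive_finite[OF fin]) (use meas_x in \<open>auto simp: E_def\<close>)
    also have "\<dots> \<le> of_nat (card ?C) * ennreal \<delta>"
    proof (rule sum_bounded_above)
      fix cs show "emeasure PD (E (recommend \<omega> cs)) \<le> ennreal \<delta>"
        using delta1[of "recommend \<omega> cs"] by (simp add: E_def D.emeasure_eq_measure ennreal_leI)
    qed
    also have "card ?C = bbox_N propose nout modified m0 cmp \<omega> (space PD) b"
    proof -
      have "(\<lambda>D. bbox_state propose nout modified m0 cmp \<omega> D b) ` space PD = Pair \<omega> ` ?C"
        by (auto simp: bbox_state_def image_image)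
      then show ?thesis unfolding bbox_N_def by (simp add: card_image inj_on_def)
    qed
    also have "of_nat (bbox_N propose nout modified m0 cmp \<omega> (space PD) b) * ennreal \<delta> \<le> ?S * ennreal \<delta>"
      by (rule mult_right_mono) (use w in \<open>auto intro: SUP_upper\<close>)
    finally show ?thesis .
  qed
  have "(\<integral>\<^sup>+ \<omega>. emeasure PD (Pair \<omega> -` ?A) \<partial>PW) \<le> (\<integral>\<^sup>+ \<omega>. ?S * ennreal \<delta> \<partial>PW)"
    by (rule nn_integral_mono) (use bound in auto)
  also have "\<dots> = ?S * ennreal \<delta>" by (simp add: W.emeasure_space_1)
  finally show ?thesis using eq by simp
qed

end
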